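(* Let $b=1/2$, let $\mathcal B$ be a Hamel basis of $\mathbb{R}$ over $\mathbb{Q}$ with $b\in\mathcal B$, and let $\pi:\mathbb{R}\to[0,1]$ be defined by $\pi(x)=\lambda^x_b-\lfloor\lambda^x_b\rfloor$ if $\lambda^x_b$ is not an odd integer, and $\pi(x)=1$ if $\lambda^x_b$ is an odd integer. Then $\pi$ is a minimal valid function for $I_b$. Equivalently, $\pi\ge 0$ and: (i) $\pi(x)+\pi(y)\ge\pi(x+y)$ for all $x,y\in\mathbb{R}$; (ii) $\pi(x)+\pi(b-x)=1$ for all $x\in\mathbb{R}$; (iii) $\pi(z)=0$ for all $z\in\mathbb{Z}$.
   Context: For $b\in\mathbb{R}\setminus\mathbb{Z}$, $I_b$ is the set of finite-support functions $y:\mathbb{R}\to\mathbb{Z}_+$ (i.e. $y(x)=0$ for all but finitely many $x$) such that $\sum_{x\in\mathbb{R}} y(x)\,x\equiv b \pmod 1$. A function $\pi:\mathbb{R}\to\mathbb{R}_+$ is a (nonnegative) valid function for $I_b$ if $\sum_{x\in\mathbb{R}}\pi(x)y(x)\ge 1$ for every $y\in I_b$. A valid function $\pi':\mathbb{R}\to\mathbb{R}_+$ dominates a valid function $\pi:\mathbb{R}\to\mathbb{R}_+$ if $\pi'\ne\pi$ and $\pi'\le\pi$ pointwise; a valid function $\pi:\mathbb{R}\to\mathbb{R}_+$ is minimal if it is not dominated by any valid function $\mathbb{R}\to\mathbb{R}_+$. (By Gomory–Johnson, a function $\pi:\mathbb{R}\to\mathbb{R}_+$ is minimal iff it satisfies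 (i), (ii), (iii).) A Hamel basis is a basis of $\mathbb{R}$ as a vector space over $\mathbb{Q}$; for $x\in\mathbb{R}$, $\lambda^x_b\in\mathbb{Q}$ denotes the coefficient of the basis element $b$ in the unique expression of $x$ as a finite rational linear combination of elements of $\mathcal B$. *)

theory Defs
  imports Complex_Main
begin

definition qscale :: "rat \<Rightarrow> real \<Rightarrow> real" where
  "qscale q x = real_of_rat q * x"

lemma vector_space_qscale: "vector_space qscale"
  by unfold_locales (auto simp: qscale_def algebra_simps of_rat_add of_rat_mult)

definition hamel_basis :: "real set \<Rightarrow> bool" where
  "hamel_basis B \<longleftrightarrow> module.independent qscale B \<and> module.span qscale B = UNIV"

definition hamel_coeff :: "real set \<Rightarrow> real \<Rightarrow> real \<Rightarrow> rat" where
  "hamel_coeff B x b = module.representation qscale B x b"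

definition Ib :: "real \<Rightarrow> (real \<Rightarrow> nat) set" where
  "Ib b = {y. finite {x. y x \<noteq> 0} \<and>
              (\<Sum>x\<in>{x. y x \<noteq> 0}. real (y x) * x) - b \<in> \<int>}"

definition valid_fn :: "real \<Rightarrow> (real \<Rightarrow> real) \<Rightarrow> bool" where
  "valid_fn b \<pi> \<longleftrightarrow> (\<forall>x. \<pi> x \<ge> 0) \<and>
     (\<forall>y\<in>Ib b. (\<Sum>x\<in>{x. y x \<noteq> 0}. \<pi> x * real (y x)) \<ge> 1)"

definition dominates :: "real \<Rightarrow> (real \<Rightarrow> real) \<Rightarrow> (real \<Rightarrow> real) \<Rightarrow> bool" where
  "dominates b \<pi>' \<pi> \<longleftrightarrow> valid_fn b \<pi>' \<and> valid_fn b \<pi> \<and> \<pi>' \<noteq> \<pi> \<and> (\<forall>x. \<pi>' x \<le> \<pi> x)"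

definition minimal_valid :: "real \<Rightarrow> (real \<Rightarrow> real) \<Rightarrow> bool" where
  "minimal_valid b \<pi> \<longleftrightarrow> valid_fn b \<pi> \<and> \<not> (\<exists>\<pi>'. dominates b \<pi>' \<pi>)"

end

theory Submission imports Defs begin

definition godd :: "rat \<Rightarrow> bool" where "godd l \<longleftrightarrow> (\<exists>k::int. l = of_int (2 * k + 1))"
definition g :: "rat \<Rightarrow> rat" where "g l = (if godd l then 1 else frac l)"

lemma g_ge_frac: "frac l \<le> g l"
  using frac_lt_1[of l] by (auto simp: g_def)
lemma g_nonneg: "0 \<le> g l" using g_ge_frac[of l] frac_ge_0[of l] by linarith
lemma g_le1: "g l \<le> 1" using frac_lt_1[of l] by (auto simp: g_def)

lemma godd_int: "godd l \<Longrightarrow> l \<in> \<int>" by (auto simp: godd_def)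

lemma int_odd_or_even: "(l::rat) \<in> \<int> \<Longrightarrow> \<not> godd l \<Longrightarrow> \<exists>k::int. l = of_int (2*k)"
proof -
  assume "l \<in> \<int>" "\<not> godd l"
  then obtain m where m: "l = of_int m" by (auto elim: Ints_cases)
  show ?thesis
  proof (cases "even m")
    case True then obtain k where "m = 2*k" by auto
    then show ?thesis using m by auto
  next
    case False then obtain k where "m = 2*k+1" using oddE by blast
    then show ?thesis using m \<open>\<not> godd l\<close> by (auto simp: godd_def)
  qed
qed

lemma even_not_godd: "\<not> godd (of_int (2*k))"
proof
  assume "godd (of_int (2*k))"
  then obtain j where "(of_int (2*k)::rat) = of_int (2*j+1)" by (auto simp: godd_def)
  then have "2*k = 2*j+1" by (simp only: of_int_eq_iff)
  then show False by presburger
qed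

lemma g_even: "g (of_int (2*k)) = 0"
  using even_not_godd[of k] by (simp add: g_def)

lemma g_subadd: "g (a + b) \<le> g a + g b"
proof (cases "godd (a+b)")
  case False
  then have "g (a+b) = frac (a+b)" by (simp add: g_def)
  also have "\<dots> \<le> frac a + frac b" using frac_add[of a b] frac_ge_0[of a] frac_ge_0[of b] by auto
  finally show ?thesis using g_ge_frac[of a] g_ge_frac[of b] by linarith
next
  case True
  then have g1: "g (a+b) = 1" by (simp add: g_def)
  show ?thesis
  proof (cases "a \<in> \<int>")
    case True
    have "b \<in> \<int>" using godd_int[OF \<open>godd (a+b)\<close>] True
      by (metis Ints_diff add_diff_cancel_left')
    show ?thesis
    proof (cases "godd a \<or> godd b")
      case True then show ?thesis using g1 g_nonneg[of a] g_nonneg[of b] by (auto simp: g_def)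
    next
      case False
      then obtain k j where "a = of_int (2*k)" "b = of_int (2*j)"
        using int_odd_or_even \<open>a \<in> \<int>\<close> \<open>b \<in> \<int>\<close> by blast
      then have "a + b = of_int (2*(k+j))" by simp
      then show ?thesis using even_not_godd \<open>godd (a+b)\<close> by metis
    qed
  next
    case False
    have "frac (a+b) = 0" using godd_int[OF \<open>godd (a+b)\<close>] frac_eq_0_iff by blast
    moreover have "frac a > 0" using False frac_eq_0_iff frac_ge_0 by (metis order_le_less)
    moreover have "frac b \<ge> 0" by simp
    ultimately have "\<not> frac a + frac b < 1"
    proof (intro notI)
      assume h0: "frac (a+b) = 0" and h1: "frac a > 0" and h2: "frac b \<ge> 0" and h3: "frac a + frac b < 1"
      then have "frac (a+b) = frac a + frac b" using frac_add[of a b] by simp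
      then show False using h0 h1 h2 by linarith
    qed
    then show ?thesis using g1 g_ge_frac[of a] g_ge_frac[of b] by linarith
  qed
qed

lemma g_compl: "g l + g (1 - l) = 1"
proof (cases "godd l")
  case True
  then obtain k where "l = of_int (2*k+1)" by (auto simp: godd_def)
  then have "1 - l = of_int (2*(-k))" by simp
  then have "g (1 - l) = 0" using g_even by metis
  then show ?thesis using True by (simp add: g_def)
next
  case F: False
  show ?thesis
  proof (cases "godd (1-l)")
    case True
    then obtain k where "1 - l = of_int (2*k+1)" by (auto simp: godd_def)
    then have "l = of_int (2*(-k))" by (simp add: algebra_simps)
    then have "g l = 0" using g_even by metis
    then show ?thesis using True by (simp add: g_def)
  next
    case False
    show ?thesis
    proof (cases "l \<in> \<int>")
      case True
      then obtain k where "l = of_int (2*k)" using int_odd_or_even F by blast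
      then have "1 - l = of_int (2*(-k)+1)" by simp
      then show ?thesis using False unfolding godd_def by blast
    next
      case nI: False
      have "frac (1 - l) = frac (- l)" using frac_1_eq[of "-l"] by (simp add: add.commute)
      also have "\<dots> = 1 - frac l" using nI by (simp add: frac_neg)
      finally show ?thesis using F False by (simp add: g_def)
    qed
  qed
qed

lemma sum_subadd:
  fixes p :: "real \<Rightarrow> real"
  assumes sub: "\<And>a b. p (a + b) \<le> p a + p b" and p0: "p 0 = 0" and "finite S"
  shows "p (\<Sum>i\<in>S. f i) \<le> (\<Sum>i\<in>S. p (f i))"
  using \<open>finite S\<close>
proof (induction S rule: finite_induct)
  case empty then show ?case using p0 by simp
next
  case (insert a S)
  have "p (\<Sum>i\<in>insert a S. f i) = p (f a + (\<Sum>i\<in>S. f i))" using insert by simp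
  also have "\<dots> \<le> p (f a) + p (\<Sum>i\<in>S. f i)" by (rule sub)
  also have "\<dots> \<le> p (f a) + (\<Sum>i\<in>S. p (f i))" using insert by simp
  finally show ?case using insert by simp
qed

lemma mult_subadd:
  fixes p :: "real \<Rightarrow> real"
  assumes sub: "\<And>a b. p (a + b) \<le> p a + p b" and p0: "p 0 = 0"
  shows "p (real n * x) \<le> p x * real n"
proof (induction n)
  case 0 then show ?case using p0 by simp
next
  case (Suc n)
  have "p (real (Suc n) * x) = p (x + real n * x)" by (simp add: algebra_simps)
  also have "\<dots> \<le> p x + p (real n * x)" by (rule sub)
  also have "\<dots> \<le> p x * real (Suc n)" using Suc by (simp add: algebra_simps)
  finally show ?case .
qed

theorem mainTheorem1:
  fixes B :: "real set" and \<pi> :: "real \<Rightarrow> real"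
  assumes hB: "hamel_basis B"
    and hb: "(1/2 :: real) \<in> B"
    and h\<pi>: "\<And>x. \<pi> x = (let l = hamel_coeff B x (1/2) in
                 if (\<exists>k::int. l = of_int (2 * k + 1)) then 1
                 else real_of_rat (l - of_int \<lfloor>l\<rfloor>))"
  shows "minimal_valid (1/2) \<pi>
       \<and> (\<forall>x. \<pi> x \<ge> 0)
       \<and> (\<forall>x y. \<pi> x + \<pi> y \<ge> \<pi> (x + y))
       \<and> (\<forall>x. \<pi> x + \<pi> (1/2 - x) = 1)
       \<and> (\<forall>z\<in>\<int>. \<pi> z = 0)"
proof -
  interpret Q: vector_space qscale by (rule vector_space_qscale)
  define L where "L x = hamel_coeff B x (1/2)" for x
  have ind: "Q.independent B" and sp: "\<And>x. x \<in> Q.span B" using hB by (auto simp: hamel_basis_def)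
  have piL: "\<pi> x = real_of_rat (g (L x))" for x
    unfolding h\<pi> L_def g_def godd_def frac_def Let_def by simp
  have Ladd: "L (x + y) = L x + L y" for x y
    unfolding L_def hamel_coeff_def using Q.representation_add[OF ind sp sp] by simp
  have Ldiff: "L (x - y) = L x - L y" for x y
    unfolding L_def hamel_coeff_def using Q.representation_diff[OF ind sp sp] by simp
  have Lb: "L (1/2) = 1"
    unfolding L_def hamel_coeff_def using Q.representation_basis[OF ind hb] by simp
  have Lscale: "L (qscale r x) = r * L x" for r x
    unfolding L_def hamel_coeff_def using Q.representation_scale[OF ind sp] by simp
  have Lint: "L (of_int k) = of_int (2*k)" for k
  proof -
    have "(of_int k :: real) = qscale (of_int (2*k)) (1/2)" by (simp add: qscale_def of_rat_mult)
    then show ?thesis using Lscale Lb by simp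
  qed
  have nonneg: "\<forall>x. \<pi> x \<ge> 0" using g_nonneg by (simp add: piL)
  have sub: "\<pi> (x + y) \<le> \<pi> x + \<pi> y" for x y
    unfolding piL Ladd of_rat_add[symmetric] of_rat_less_eq by (rule g_subadd)
  have compl: "\<pi> x + \<pi> (1/2 - x) = 1" for x
  proof -
    have "\<pi> x + \<pi> (1/2 - x) = real_of_rat (g (L x) + g (1 - L x))"
      unfolding piL Ldiff Lb of_rat_add by simp
    then show ?thesis using g_compl by simp
  qed
  have zero: "\<forall>z\<in>\<int>. \<pi> z = 0"
  proof
    fix z :: real assume "z \<in> \<int>"
    then obtain k where "z = of_int k" by (auto elim: Ints_cases)
    then show "\<pi> z = 0" by (simp add: piL Lint g_even del: of_int_mult)
  qed
  have p0: "\<pi> 0 = 0" using zero by simp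
  have valid: "valid_fn (1/2) \<pi>"
    unfolding valid_fn_def
  proof (intro conjI ballI)
    show "\<forall>x. 0 \<le> \<pi> x" by (rule nonneg)
    fix y assume "y \<in> Ib (1/2)"
    then have fin: "finite {x. y x \<noteq> 0}" and
      hI: "(\<Sum>x\<in>{x. y x \<noteq> 0}. real (y x) * x) - 1/2 \<in> \<int>" by (auto simp: Ib_def)
    define S where "S = {x. y x \<noteq> 0}"
    obtain k where k: "(\<Sum>x\<in>S. real (y x) * x) - 1/2 = of_int k" using hI unfolding S_def by (auto elim: Ints_cases)
    have "L (\<Sum>x\<in>S. real (y x) * x) = L (1/2 + of_int k)" using k by (simp add: algebra_simps)
    also have "\<dots> = of_int (2*k+1)" using Ladd Lb Lint by simp
    finally have one: "\<pi> (\<Sum>x\<in>S. real (y x) * x) = 1" unfolding piL g_def godd_def by auto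
    have "\<pi> (\<Sum>x\<in>S. real (y x) * x) \<le> (\<Sum>x\<in>S. \<pi> (real (y x) * x))"
      using sum_subadd[of \<pi>, OF sub p0] fin unfolding S_def by blast
    also have "\<dots> \<le> (\<Sum>x\<in>S. \<pi> x * real (y x))"
      by (rule sum_mono) (rule mult_subadd[OF sub p0])
    finally show "1 \<le> (\<Sum>x\<in>{x. y x \<noteq> 0}. \<pi> x * real (y x))" unfolding S_def one[unfolded S_def] .
  qed
  have nodom: "\<not> (\<exists>\<pi>'. dominates (1/2) \<pi>' \<pi>)"
  proof
    assume "\<exists>\<pi>'. dominates (1/2) \<pi>' \<pi>"
    then obtain \<pi>' where v': "valid_fn (1/2) \<pi>'" and ne: "\<pi>' \<noteq> \<pi>" and le: "\<And>x. \<pi>' x \<le> \<pi> x"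
      unfolding dominates_def by blast
    obtain x where lt: "\<pi>' x < \<pi> x" using ne le by (meson ext order_less_le)
    define y :: "real \<Rightarrow> nat" where "y t = (if t = x then 1 else 0) + (if t = 1/2 - x then 1 else 0)" for t
    have supp: "{t. y t \<noteq> 0} = {x, 1/2 - x}" by (auto simp: y_def)
    show False
    proof (cases "x = 1/2 - x")
      case True
      then have s1: "{t. y t \<noteq> 0} = {x}" using supp by simp
      have yx: "y x = 2" using True by (simp add: y_def)
      have "2 * x - 1/2 = 0" using True by linarith
      then have "real (y x) * x - 1/2 = 0" using yx by simp
      then have "real (y x) * x - 1/2 \<in> \<int>" by (metis Ints_0)
      then have "y \<in> Ib (1/2)" unfolding Ib_def mem_Collect_eq s1 by simp
      then have "1 \<le> (\<Sum>t\<in>{t. y t \<noteq> 0}. \<pi>' t * real (y t))" using v' unfolding valid_fn_def by blast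
      then have "1 \<le> \<pi>' x * 2" unfolding s1 using yx by simp
      moreover have "\<pi> x + \<pi> x = 1" using compl[of x] True by simp
      ultimately show False using lt by linarith
    next
      case False
      have yx: "y x = 1" "y (1/2 - x) = 1" using False by (auto simp: y_def)
      have "y \<in> Ib (1/2)" unfolding Ib_def mem_Collect_eq supp using yx False by simp
      then have "1 \<le> (\<Sum>t\<in>{t. y t \<noteq> 0}. \<pi>' t * real (y t))" using v' unfolding valid_fn_def by blast
      then have "1 \<le> \<pi>' x + \<pi>' (1/2 - x)" unfolding supp using yx False by simp
      moreover have "\<pi>' (1/2 - x) \<le> \<pi> (1/2 - x)" by (rule le)
      ultimately show False using lt compl[of x] by linarith
    qed
  qed
  show ?thesis using valid nodom nonneg sub compl zero unfolding minimal_valid_def by auto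
qed

end
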